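(* Let $A=\{x_1,\dots,x_\ell\}$ be a finite subset of $(\mathbb{R}\cup\{-\infty\})^d$ and let $\{\alpha_k\}_{k\in\mathbb N}$ be a sequence of positive real numbers with $\lim_{k\to\infty}\alpha_k=+\infty$. Then, in the Painlevé–Kuratowski sense, $$\lim_{k\to\infty} Co^{\sigma_{\alpha_k}}(A)=Co^{\sigma_{\infty}}(A).$$ Similarly, let $A=\{x_1,\dots,x_\ell\}$ be a finite subset of $(\mathbb{R}\cup\{+\infty\})^d$ and let $\{\alpha_k\}_{k\in\mathbb N}$ be a sequence of negative real numbers with $\lim_{k\to\infty}\alpha_k=-\infty$. Then $$\lim_{k\to\infty} Co^{\sigma_{\alpha_k}}(A)=Co^{\sigma_{-\infty}}(A).$$
   Context: Notation: $1\!\!1_d$ is the vector of ones in dimension $d$; $\mathbf{e}^z$ and $\mathbf{ln}(z)$ denote componentwise exponential and logarithm, with conventions $e^{-\infty}=0$, $\ln 0=-\infty$, and for $\alpha\neq 0$, $e^{\alpha t}=0$ when $\alpha t=-\infty$. For $\alpha\neq 0$ let $\mathbb M_\alpha=\mathbb{R}\cup\{-\infty\}$ if $\alpha>0$ and $\mathbb M_\alpha=\mathbb{R}\cup\{+\infty\}$ if $\alpha<0$. For a finite set $A=\{x_1,\dots,x_\ell\}\subset\mathbb M_\alpha^d$, the $\sigma_\alpha$-convex hull is $$Co^{\sigma_\alpha}(A)=\Big\{\tfrac1\alpha\mathbf{ln}\Big(\sum_{k=1}^\ell \mathbf e^{\alpha(t_k1\!\!1_d+x_k)}\Big):\ \tfrac1\alpha\ln\Big(\sum_{k=1}^\ell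 e^{\alpha t_k}\Big)=0,\ t\in\mathbb M_\alpha^\ell\Big\}.$$ The Max-Plus convex hull of $A\subset(\mathbb{R}\cup\{-\infty\})^d$ is $Co^{\sigma_\infty}(A)=\{\bigvee_{k}(t_k1\!\!1_d+x_k):\max_k t_k=0,\ t\in(\mathbb{R}\cup\{-\infty\})^\ell\}$, and the Min-Plus convex hull of $A\subset(\mathbb{R}\cup\{+\infty\})^d$ is $Co^{\sigma_{-\infty}}(A)=\{\bigwedge_{k}(t_k1\!\!1_d+x_k):\min_k t_k=0,\ t\in(\mathbb{R}\cup\{+\infty\})^\ell\}$, where $\vee,\wedge$ are componentwise max and min. For a sequence of sets $E_n$, the lower Painlevé–Kuratowski limit is the set of points $p$ such that there exist $p_n\in E_n$ with $p_n\to p$; the upper limit is the set of $p$ such that $p_{n_j}\to p$ for some subsequence with $p_{n_j}\in E_{n_j}$; the limit exists and equals $E$ when both coincide with $E$. (Points with infinite coordinates are handled with the usual order topology on $\mathbb{R}\cup\{\pm\infty\}$.) *)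

theory Defs
  imports "HOL-Analysis.Analysis"
begin

definition M_alpha :: "real \<Rightarrow> ereal set" where
  "M_alpha \<alpha> = (if \<alpha> > 0 then {z. z \<noteq> \<infinity>} else {z. z \<noteq> -\<infinity>})"

definition sexp :: "real \<Rightarrow> ereal \<Rightarrow> real" where
  "sexp \<alpha> z = (if ereal \<alpha> * z = -\<infinity> then 0 else exp (real_of_ereal (ereal \<alpha> * z)))"

definition slog :: "real \<Rightarrow> real \<Rightarrow> ereal" where
  "slog \<alpha> s = (if s = 0 then ereal (1 / \<alpha>) * (-\<infinity>) else ereal (ln s / \<alpha>))"

definition sigma_hull :: "real \<Rightarrow> (ereal ^ 'n) set \<Rightarrow> (ereal ^ 'n) set" where
  "sigma_hull \<alpha> A =
     {(\<chi> i. slog \<alpha> (\<Sum>x\<in>A. sexp \<alpha> (t x + x $ i))) | t.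
        (\<forall>x\<in>A. t x \<in> M_alpha \<alpha>) \<and> slog \<alpha> (\<Sum>x\<in>A. sexp \<alpha> (t x)) = 0}"

definition maxplus_hull :: "(ereal ^ 'n) set \<Rightarrow> (ereal ^ 'n) set" where
  "maxplus_hull A =
     {(\<chi> i. (SUP x\<in>A. t x + x $ i)) | t.
        (\<forall>x\<in>A. t x \<noteq> \<infinity>) \<and> (SUP x\<in>A. t x) = 0}"

definition minplus_hull :: "(ereal ^ 'n) set \<Rightarrow> (ereal ^ 'n) set" where
  "minplus_hull A =
     {(\<chi> i. (INF x\<in>A. t x + x $ i)) | t.
        (\<forall>x\<in>A. t x \<noteq> -\<infinity>) \<and> (INF x\<in>A. t x) = 0}"

definition PK_liminf :: "(nat \<Rightarrow> 'a::topological_space set) \<Rightarrow> 'a set" where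
  "PK_liminf E = {p. \<exists>q. (\<forall>n. q n \<in> E n) \<and> q \<longlonglongrightarrow> p}"

definition PK_limsup :: "(nat \<Rightarrow> 'a::topological_space set) \<Rightarrow> 'a set" where
  "PK_limsup E = {p. \<exists>r q. strict_mono r \<and> (\<forall>j. q j \<in> E (r j)) \<and> q \<longlonglongrightarrow> p}"

definition PK_limit :: "(nat \<Rightarrow> 'a::topological_space set) \<Rightarrow> 'a set \<Rightarrow> bool" where
  "PK_limit E S \<longleftrightarrow> PK_liminf E = S \<and> PK_limsup E = S"

end

theory Submission
  imports Defs
begin


lemma sexp_pos:
  assumes "\<alpha> > 0" "z \<noteq> \<infinity>"
  shows "sexp \<alpha> z = (if z = -\<infinity> then 0 else exp (\<alpha> * real_of_ereal z))"
  using assms by (cases z) (auto simp: sexp_def)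

lemma sexp_nonneg: "sexp \<alpha> z \<ge> 0"
  by (simp add: sexp_def)

lemma slog_pos0: "\<alpha> > 0 \<Longrightarrow> slog \<alpha> 0 = -\<infinity>"
  by (simp add: slog_def)

lemma slog_nz: "s \<noteq> 0 \<Longrightarrow> slog \<alpha> s = ereal (ln s / \<alpha>)"
  by (simp add: slog_def)

lemma lse_bounds:
  assumes a: "\<alpha> > 0" and fin: "finite A" and ne: "A \<noteq> {}" and y: "\<forall>x\<in>A. y x \<noteq> \<infinity>"
  shows "Max (y ` A) \<le> slog \<alpha> (\<Sum>x\<in>A. sexp \<alpha> (y x))"
    and "slog \<alpha> (\<Sum>x\<in>A. sexp \<alpha> (y x)) \<le> Max (y ` A) + ereal (ln (card A) / \<alpha>)"
proof -
  define M where "M = Max (y ` A)"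
  have "M \<in> y ` A" unfolding M_def using fin ne by simp
  then obtain x0 where x0: "x0 \<in> A" "y x0 = M" by auto
  have le: "y x \<le> M" if "x \<in> A" for x unfolding M_def using fin that by auto
  have "(M \<le> slog \<alpha> (\<Sum>x\<in>A. sexp \<alpha> (y x))) \<and> (slog \<alpha> (\<Sum>x\<in>A. sexp \<alpha> (y x)) \<le> M + ereal (ln (card A) / \<alpha>))"
  proof (cases "M = -\<infinity>")
    case True
    then have "\<forall>x\<in>A. y x = -\<infinity>" using le by (metis ereal_infty_less_eq(2))
    then have "(\<Sum>x\<in>A. sexp \<alpha> (y x)) = 0" using a by (simp add: sexp_def)
    then show ?thesis using True a by (simp add: slog_pos0)
  next
    case False
    then obtain m where m: "M = ereal m" using x0 y by (cases M) auto
    have b1: "sexp \<alpha> (y x) \<le> exp (\<alpha> * m)" if "x \<in> A" for x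
    proof -
      have "y x \<le> ereal m" using le that m by simp
      then show ?thesis using sexp_pos[OF a, of "y x"] y that a
        by (cases "y x") auto
    qed
    have e0: "sexp \<alpha> (y x0) = exp (\<alpha> * m)" using sexp_pos[OF a, of "y x0"] x0 m by simp
    have S1: "exp (\<alpha> * m) \<le> (\<Sum>x\<in>A. sexp \<alpha> (y x))"
      using member_le_sum[of x0 A "\<lambda>x. sexp \<alpha> (y x)"] x0 fin e0 sexp_nonneg by auto
    have S2: "(\<Sum>x\<in>A. sexp \<alpha> (y x)) \<le> real (card A) * exp (\<alpha> * m)"
      using sum_bounded_above[of A "\<lambda>x. sexp \<alpha> (y x)" "exp (\<alpha> * m)"] b1 by auto
    define S where "S = (\<Sum>x\<in>A. sexp \<alpha> (y x))"
    have Spos: "S > 0" using S1 unfolding S_def by (smt (verit) exp_gt_zero)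
    have l1: "\<alpha> * m \<le> ln S" using S1 Spos unfolding S_def by (metis ln_exp ln_le_cancel_iff exp_gt_zero)
    have cpos: "real (card A) > 0" using fin ne by (simp add: card_gt_0_iff)
    have l2: "ln S \<le> ln (real (card A)) + \<alpha> * m"
    proof -
      have "ln S \<le> ln (real (card A) * exp (\<alpha> * m))" using S2 Spos cpos unfolding S_def by simp
      also have "\<dots> = ln (real (card A)) + \<alpha> * m" using cpos by (simp add: ln_mult)
      finally show ?thesis .
    qed
    have "m \<le> ln S / \<alpha>" using l1 a by (simp add: field_simps)
    moreover have "ln S / \<alpha> \<le> m + ln (real (card A)) / \<alpha>" using l2 a by (simp add: field_simps)
    ultimately show ?thesis using Spos m unfolding S_def by (simp add: slog_nz)
  qed
  then show "Max (y ` A) \<le> slog \<alpha> (\<Sum>x\<in>A. sexp \<alpha> (y x))"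
    and "slog \<alpha> (\<Sum>x\<in>A. sexp \<alpha> (y x)) \<le> Max (y ` A) + ereal (ln (card A) / \<alpha>)"
    unfolding M_def by auto
qed

lemma sexp_shift:
  assumes a: "\<alpha> > 0" and z: "z \<noteq> \<infinity>"
  shows "sexp \<alpha> (z - ereal c) = exp (- \<alpha> * c) * sexp \<alpha> z"
proof (cases z)
  case (real r)
  have "sexp \<alpha> (z - ereal c) = exp (\<alpha> * (r - c))" using real a by (simp add: sexp_def)
  also have "\<dots> = exp (- \<alpha> * c) * exp (\<alpha> * r)" by (simp add: algebra_simps mult_exp_exp)
  finally show ?thesis using real a by (simp add: sexp_def)
qed (use assms in \<open>auto simp: sexp_def\<close>)

lemma slog_shift:
  assumes a: "\<alpha> > 0" and S: "S \<ge> 0"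
  shows "slog \<alpha> (exp (- \<alpha> * c) * S) = slog \<alpha> S - ereal c"
proof (cases "S = 0")
  case True then show ?thesis using a by (simp add: slog_def)
next
  case False
  then have "S > 0" using S by simp
  then have "ln (exp (- \<alpha> * c) * S) / \<alpha> = ln S / \<alpha> - c" using a
    by (simp add: ln_mult field_simps)
  then show ?thesis using False by (simp add: slog_def)
qed

lemma ereal_sandwich:
  fixes q :: "nat \<Rightarrow> ereal"
  assumes e: "\<epsilon> \<longlonglongrightarrow> 0" and lo: "\<And>k. M - ereal (\<epsilon> k) \<le> q k" and hi: "\<And>k. q k \<le> M + ereal (\<epsilon> k)"
  shows "q \<longlonglongrightarrow> M"
proof (cases M)
  case (real m)
  have t1: "(\<lambda>k. ereal (m - \<epsilon> k)) \<longlonglongrightarrow> ereal m"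
    using e by (intro tendsto_intros) (auto intro: tendsto_eq_intros)
  have t2: "(\<lambda>k. ereal (m + \<epsilon> k)) \<longlonglongrightarrow> ereal m"
    using e by (intro tendsto_intros) (auto intro: tendsto_eq_intros)
  show ?thesis
    using tendsto_sandwich[OF _ _ t1 t2] lo hi real by auto
next
  case PInf
  then have "q = (\<lambda>k. \<infinity>)" using lo by (simp add: fun_eq_iff)
  then show ?thesis using PInf by simp
next
  case MInf
  then have "q = (\<lambda>k. -\<infinity>)" using hi by (simp add: fun_eq_iff)
  then show ?thesis using MInf by simp
qed

lemma tendsto_Max_fin:
  fixes f :: "nat \<Rightarrow> 'a \<Rightarrow> ereal"
  assumes "finite A" "A \<noteq> {}" "\<And>x. x \<in> A \<Longrightarrow> (\<lambda>j. f j x) \<longlonglongrightarrow> L x"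
  shows "(\<lambda>j. Max ((\<lambda>x. f j x) ` A)) \<longlonglongrightarrow> Max (L ` A)"
  using assms
proof (induction A rule: finite_ne_induct)
  case (singleton x)
  then show ?case by simp
next
  case (insert a A)
  have "(\<lambda>j. max (f j a) (Max ((\<lambda>x. f j x) ` A))) \<longlonglongrightarrow> max (L a) (Max (L ` A))"
    using insert by (intro tendsto_max) auto
  then show ?case using insert by simp
qed

lemma ereal_minus_mono2:
  fixes a b :: ereal
  shows "a \<le> b \<Longrightarrow> c \<le> e \<Longrightarrow> a - ereal e \<le> b - ereal c"
  by (cases a; cases b) auto

lemma ereal_minus_le: "0 \<le> c \<Longrightarrow> (b::ereal) - ereal c \<le> b"
  by (cases b) auto

lemma SUP_Max_fin: "finite A \<Longrightarrow> A \<noteq> {} \<Longrightarrow> (SUP x\<in>A. f x) = Max (f ` A)" for f :: "'a \<Rightarrow> ereal"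
  by (simp add: cSup_eq_Max)



lemma eps_tendsto:
  fixes c :: real
  assumes "filterlim \<alpha> at_top sequentially"
  shows "(\<lambda>k. c / \<alpha> k) \<longlonglongrightarrow> 0"
proof -
  have "(\<lambda>k. c * inverse (\<alpha> k)) \<longlonglongrightarrow> c * 0"
    by (intro tendsto_mult tendsto_const tendsto_inverse_0_at_top assms)
  then show ?thesis by (simp add: divide_inverse)
qed

lemma minus_ereal_noninf: "z \<noteq> \<infinity> \<Longrightarrow> z - ereal c \<noteq> \<infinity>"
  by (cases z) auto

lemma hull_sub_liminf:
  fixes A :: "(ereal ^ 'n) set"
  assumes fin: "finite A" and Ax: "\<forall>x\<in>A. \<forall>i. x $ i \<noteq> \<infinity>" and apos: "\<forall>k. \<alpha> k > 0"
    and lim: "filterlim \<alpha> at_top sequentially"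
  shows "maxplus_hull A \<subseteq> PK_liminf (\<lambda>k. sigma_hull (\<alpha> k) A)"
proof
  fix p assume "p \<in> maxplus_hull A"
  then obtain t where p: "p = (\<chi> i. SUP x\<in>A. t x + x $ i)" and tinf: "\<forall>x\<in>A. t x \<noteq> \<infinity>"
    and t0: "(SUP x\<in>A. t x) = 0"
    unfolding maxplus_hull_def by blast
  have ne: "A \<noteq> {}" using t0 by (auto simp: bot_ereal_def)
  have tmax: "Max (t ` A) = 0" using t0 SUP_Max_fin[OF fin ne] by simp
  define \<epsilon> where "\<epsilon> k = ln (real (card A)) / \<alpha> k" for k
  have eps: "\<epsilon> \<longlonglongrightarrow> 0" unfolding \<epsilon>_def using eps_tendsto[OF lim] .
  define Lt where "Lt k = slog (\<alpha> k) (\<Sum>x\<in>A. sexp (\<alpha> k) (t x))" for k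
  have Lt_lo: "0 \<le> Lt k" for k using lse_bounds(1)[OF apos[rule_format] fin ne tinf] tmax Lt_def by simp
  have Lt_hi: "Lt k \<le> ereal (\<epsilon> k)" for k using lse_bounds(2)[OF apos[rule_format] fin ne tinf] tmax Lt_def \<epsilon>_def by simp
  define c where "c k = real_of_ereal (Lt k)" for k
  have Ltc: "Lt k = ereal (c k)" for k using Lt_lo[of k] Lt_hi[of k] unfolding c_def by (cases "Lt k") auto
  have c0: "0 \<le> c k" and ce: "c k \<le> \<epsilon> k" for k using Lt_lo[of k] Lt_hi[of k] Ltc[of k] by auto
  define S where "S k = (\<Sum>x\<in>A. sexp (\<alpha> k) (t x))" for k
  have Snn: "S k \<ge> 0" for k unfolding S_def by (simp add: sum_nonneg sexp_nonneg)
  have Snz: "S k \<noteq> 0" for k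
  proof
    assume "S k = 0"
    then have "Lt k = -\<infinity>" unfolding Lt_def S_def[symmetric] using apos by (simp add: slog_pos0)
    then show False using Ltc by simp
  qed
  have Sval: "S k = exp (\<alpha> k * c k)" for k
  proof -
    have "ln (S k) / \<alpha> k = c k" using Ltc[of k] Snz[of k] unfolding Lt_def S_def[symmetric] by (simp add: slog_nz)
    then have "ln (S k) = \<alpha> k * c k" using apos[rule_format, of k] by (simp add: field_simps)
    then show ?thesis using Snz[of k] Snn[of k] by (metis exp_ln less_eq_real_def)
  qed
  define s where "s k x = t x - ereal (c k)" for k x
  define q where "q k = (\<chi> i. slog (\<alpha> k) (\<Sum>x\<in>A. sexp (\<alpha> k) (s k x + x $ i)))" for k
  have sumshift: "(\<Sum>x\<in>A. sexp (\<alpha> k) (z x - ereal (c k))) = exp (- \<alpha> k * c k) * (\<Sum>x\<in>A. sexp (\<alpha> k) (z x))"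
    if "\<forall>x\<in>A. z x \<noteq> \<infinity>" for k z
    using that sexp_shift[OF apos[rule_format, of k]] by (simp add: sum_distrib_left)
  have qin: "q k \<in> sigma_hull (\<alpha> k) A" for k
  proof -
    have "\<forall>x\<in>A. s k x \<in> M_alpha (\<alpha> k)" using tinf apos unfolding s_def M_alpha_def by (auto simp: minus_ereal_noninf)
    moreover have "slog (\<alpha> k) (\<Sum>x\<in>A. sexp (\<alpha> k) (s k x)) = 0"
    proof -
      have "(\<Sum>x\<in>A. sexp (\<alpha> k) (s k x)) = exp (- \<alpha> k * c k) * S k"
        unfolding s_def S_def using sumshift[of t k] tinf by simp
      also have "\<dots> = 1" using Sval by (simp add: exp_minus field_simps)
      finally show ?thesis by (simp add: slog_def)
    qed
    ultimately show ?thesis unfolding sigma_hull_def q_def by blast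
  qed
  have qlim: "q \<longlonglongrightarrow> p"
  proof (rule vec_tendstoI)
    fix i
    define N where "N = Max ((\<lambda>x. t x + x $ i) ` A)"
    have ni: "\<forall>x\<in>A. t x + x $ i \<noteq> \<infinity>" using tinf Ax by auto
    have pi: "p $ i = N" unfolding p N_def using SUP_Max_fin[OF fin ne] by simp
    define L where "L k = slog (\<alpha> k) (\<Sum>x\<in>A. sexp (\<alpha> k) (t x + x $ i))" for k
    have L1: "N \<le> L k" for k unfolding N_def L_def using lse_bounds(1)[OF apos[rule_format] fin ne ni] by simp
    have L2: "L k \<le> N + ereal (\<epsilon> k)" for k unfolding N_def L_def \<epsilon>_def using lse_bounds(2)[OF apos[rule_format] fin ne ni] by simp
    have qi: "q k $ i = L k - ereal (c k)" for k
    proof -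
      have "(\<Sum>x\<in>A. sexp (\<alpha> k) (s k x + x $ i)) = (\<Sum>x\<in>A. sexp (\<alpha> k) ((t x + x $ i) - ereal (c k)))"
        unfolding s_def
        by (intro sum.cong refl) (metis add.commute add_diff_eq_ereal)
      also have "\<dots> = exp (- \<alpha> k * c k) * (\<Sum>x\<in>A. sexp (\<alpha> k) (t x + x $ i))"
        using sumshift[of "\<lambda>x. t x + x $ i" k] ni by simp
      moreover have "(\<Sum>x\<in>A. sexp (\<alpha> k) (t x + x $ i)) \<ge> 0" by (simp add: sum_nonneg sexp_nonneg)
      ultimately show ?thesis unfolding q_def L_def
        using slog_shift[OF apos[rule_format, of k]] by simp
    qed
    have "(\<lambda>k. q k $ i) \<longlonglongrightarrow> N"
    proof (rule ereal_sandwich[OF eps])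
      fix k
      show "N - ereal (\<epsilon> k) \<le> q k $ i" unfolding qi using ereal_minus_mono2[OF L1 ce] .
      show "q k $ i \<le> N + ereal (\<epsilon> k)" unfolding qi using ereal_minus_le[OF c0, of "L k"] L2 by (rule order_trans)
    qed
    then show "(\<lambda>k. q k $ i) \<longlonglongrightarrow> p $ i" using pi by simp
  qed
  show "p \<in> PK_liminf (\<lambda>k. sigma_hull (\<alpha> k) A)"
    unfolding PK_liminf_def using qin qlim by blast
qed



lemma finite_subseq:
  fixes f :: "nat \<Rightarrow> 'a \<Rightarrow> ereal"
  assumes "finite A"
  shows "\<exists>r. strict_mono r \<and> (\<forall>x\<in>A. \<exists>l. (\<lambda>j. f (r j) x) \<longlonglongrightarrow> l)"
  using assms
proof (induction A rule: finite_induct)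
  case empty
  then show ?case by (auto intro: strict_mono_id)
next
  case (insert a A)
  then obtain r where r: "strict_mono r" "\<forall>x\<in>A. \<exists>l. (\<lambda>j. f (r j) x) \<longlonglongrightarrow> l" by blast
  obtain l r2 where r2: "strict_mono r2" "((\<lambda>j. f (r j) a) \<circ> r2) \<longlonglongrightarrow> l"
    using compact_complete_linorder[of "\<lambda>j. f (r j) a"] by blast
  have "strict_mono (r \<circ> r2)" using r r2 by (simp add: strict_mono_o)
  moreover have "\<forall>x\<in>insert a A. \<exists>l. (\<lambda>j. f ((r \<circ> r2) j) x) \<longlonglongrightarrow> l"
  proof
    fix x assume "x \<in> insert a A"
    then show "\<exists>l. (\<lambda>j. f ((r \<circ> r2) j) x) \<longlonglongrightarrow> l"
    proof
      assume "x = a" then show ?thesis using r2 by (auto simp: o_def)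
    next
      assume "x \<in> A"
      then obtain l' where "(\<lambda>j. f (r j) x) \<longlonglongrightarrow> l'" using r by blast
      from LIMSEQ_subseq_LIMSEQ[OF this r2(1)] show ?thesis by (auto simp: o_def)
    qed
  qed
  ultimately show ?case by blast
qed

lemma ereal_aux1: "0 \<le> a + ereal e \<Longrightarrow> 0 - ereal e \<le> (a::ereal)"
  by (cases a) auto

lemma limsup_sub_hull:
  fixes A :: "(ereal ^ 'n) set"
  assumes fin: "finite A" and Ax: "\<forall>x\<in>A. \<forall>i. x $ i \<noteq> \<infinity>" and apos: "\<forall>k. \<alpha> k > 0"
    and lim: "filterlim \<alpha> at_top sequentially"
  shows "PK_limsup (\<lambda>k. sigma_hull (\<alpha> k) A) \<subseteq> maxplus_hull A"
proof
  fix p assume "p \<in> PK_limsup (\<lambda>k. sigma_hull (\<alpha> k) A)"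
  then obtain r q where r: "strict_mono r" and qin: "\<forall>j. q j \<in> sigma_hull (\<alpha> (r j)) A"
    and qlim: "q \<longlonglongrightarrow> p" unfolding PK_limsup_def by blast
  define \<beta> where "\<beta> j = \<alpha> (r j)" for j
  have bpos: "\<forall>j. \<beta> j > 0" using apos \<beta>_def by simp
  have blim: "filterlim \<beta> at_top sequentially"
    unfolding \<beta>_def using filterlim_compose[OF lim filterlim_subseq[OF r]] by (simp add: o_def)
  have "\<forall>j. \<exists>t. q j = (\<chi> i. slog (\<beta> j) (\<Sum>x\<in>A. sexp (\<beta> j) (t x + x $ i))) \<and>
        (\<forall>x\<in>A. t x \<in> M_alpha (\<beta> j)) \<and> slog (\<beta> j) (\<Sum>x\<in>A. sexp (\<beta> j) (t x)) = 0"
    using qin unfolding sigma_hull_def \<beta>_def by blast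
  then obtain tt where tt0: "\<forall>j. q j = (\<chi> i. slog (\<beta> j) (\<Sum>x\<in>A. sexp (\<beta> j) (tt j x + x $ i))) \<and>
        (\<forall>x\<in>A. tt j x \<in> M_alpha (\<beta> j)) \<and> slog (\<beta> j) (\<Sum>x\<in>A. sexp (\<beta> j) (tt j x)) = 0"
    by (rule choice[THEN exE])
  have tt: "\<And>j. q j = (\<chi> i. slog (\<beta> j) (\<Sum>x\<in>A. sexp (\<beta> j) (tt j x + x $ i)))"
    "\<And>j. \<forall>x\<in>A. tt j x \<in> M_alpha (\<beta> j)" "\<And>j. slog (\<beta> j) (\<Sum>x\<in>A. sexp (\<beta> j) (tt j x)) = 0"
    using tt0 by auto
  have ne: "A \<noteq> {}"
  proof
    assume "A = {}"
    then show False using tt(3)[of 0] bpos by (simp add: slog_pos0)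
  qed
  have ttinf: "\<forall>x\<in>A. tt j x \<noteq> \<infinity>" for j using tt(2)[of j] bpos unfolding M_alpha_def by auto
  define \<epsilon> where "\<epsilon> j = ln (real (card A)) / \<beta> j" for j
  have eps: "\<epsilon> \<longlonglongrightarrow> 0" unfolding \<epsilon>_def using eps_tendsto[OF blim] .
  have Mt1: "Max (tt j ` A) \<le> 0" for j
    using lse_bounds(1)[OF bpos[rule_format] fin ne ttinf, of j j] tt(3)[of j] by (simp only:)
  have Mt2: "0 \<le> Max (tt j ` A) + ereal (\<epsilon> j)" for j
    using lse_bounds(2)[OF bpos[rule_format] fin ne ttinf, of j j] tt(3)[of j] \<epsilon>_def by (simp only:)
  from finite_subseq[OF fin, of tt] obtain r2 where r2': "strict_mono r2 \<and> (\<forall>x\<in>A. \<exists>l. (\<lambda>j. tt (r2 j) x) \<longlonglongrightarrow> l)"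
    by (rule exE)
  have r2: "strict_mono r2" "\<forall>x\<in>A. \<exists>l. (\<lambda>j. tt (r2 j) x) \<longlonglongrightarrow> l" using r2' by simp_all
  define T where "T x = lim (\<lambda>j. tt (r2 j) x)" for x
  have Tlim: "(\<lambda>j. tt (r2 j) x) \<longlonglongrightarrow> T x" if xA: "x \<in> A" for x
  proof -
    obtain l where l: "(\<lambda>j. tt (r2 j) x) \<longlonglongrightarrow> l" using bspec[OF r2(2) xA] by (rule exE)
    then have "lim (\<lambda>j. tt (r2 j) x) = l" by (rule limI)
    then show ?thesis using l unfolding T_def by simp
  qed
  have Tle: "T x \<le> 0" if "x \<in> A" for x
  proof (rule LIMSEQ_le_const2[OF Tlim[OF that]])
    show "\<exists>N. \<forall>n\<ge>N. tt (r2 n) x \<le> 0"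
    proof (intro exI allI impI)
      fix n
      have "tt (r2 n) x \<le> Max (tt (r2 n) ` A)" using fin that by simp
      then show "tt (r2 n) x \<le> 0" using Mt1[of "r2 n"] by simp
    qed
  qed
  have Tinf: "\<forall>x\<in>A. T x \<noteq> \<infinity>"
  proof
    fix x assume "x \<in> A" then have "T x \<le> 0" by (rule Tle)
    then show "T x \<noteq> \<infinity>" by auto
  qed
  have eps2: "(\<lambda>j. \<epsilon> (r2 j)) \<longlonglongrightarrow> 0" using LIMSEQ_subseq_LIMSEQ[OF eps r2(1)] by (simp add: o_def)
  have TM: "Max (T ` A) = 0"
  proof -
    have a: "(\<lambda>j. Max ((\<lambda>x. tt (r2 j) x) ` A)) \<longlonglongrightarrow> Max (T ` A)"
      using tendsto_Max_fin[OF fin ne Tlim] .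
    have b: "(\<lambda>j. Max ((\<lambda>x. tt (r2 j) x) ` A)) \<longlonglongrightarrow> 0"
    proof (rule ereal_sandwich[OF eps2])
      fix k
      show "0 - ereal (\<epsilon> (r2 k)) \<le> Max ((\<lambda>x. tt (r2 k) x) ` A)" using ereal_aux1[OF Mt2] by simp
      have c1: "real (card A) \<ge> 1" using fin ne by (simp add: Suc_leI card_gt_0_iff)
      have "0 \<le> \<epsilon> (r2 k)" unfolding \<epsilon>_def using c1 bpos by (simp add: divide_nonneg_pos)
      then show "Max ((\<lambda>x. tt (r2 k) x) ` A) \<le> 0 + ereal (\<epsilon> (r2 k))" using Mt1[of "r2 k"]
        by (metis add.left_neutral order_trans zero_ereal_def ereal_less_eq(3))
    qed
    show ?thesis using LIMSEQ_unique[OF a b] .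
  qed
  have pcomp: "p $ i = Max ((\<lambda>x. T x + x $ i) ` A)" for i
  proof -
    define N where "N = Max ((\<lambda>x. T x + x $ i) ` A)"
    define Nj where "Nj j = Max ((\<lambda>x. tt (r2 j) x + x $ i) ` A)" for j
    have Njlim: "Nj \<longlonglongrightarrow> N" unfolding Nj_def N_def
    proof (rule tendsto_Max_fin[OF fin ne])
      fix x assume x: "x \<in> A"
      show "(\<lambda>j. tt (r2 j) x + x $ i) \<longlonglongrightarrow> T x + x $ i"
        using Tinf Ax x by (intro tendsto_add_ereal_general Tlim tendsto_const) auto
    qed
    have ni: "\<forall>x\<in>A. tt (r2 j) x + x $ i \<noteq> \<infinity>" for j using ttinf Ax by auto
    have lo: "Nj j \<le> q (r2 j) $ i" for j
      unfolding Nj_def tt(1) using lse_bounds(1)[OF bpos[rule_format] fin ne ni, of j "r2 j"] by simp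
    have hi: "q (r2 j) $ i \<le> Nj j + ereal (\<epsilon> (r2 j))" for j
      unfolding Nj_def tt(1) \<epsilon>_def using lse_bounds(2)[OF bpos[rule_format] fin ne ni, of "r2 j" j] by simp
    have up: "(\<lambda>j. Nj j + ereal (\<epsilon> (r2 j))) \<longlonglongrightarrow> N + ereal 0"
      by (rule tendsto_add_ereal_general[OF _ Njlim tendsto_ereal[OF eps2]]) simp
    have c1: "(\<lambda>j. q (r2 j) $ i) \<longlonglongrightarrow> N"
      using tendsto_sandwich[OF _ _ Njlim, of "\<lambda>j. q (r2 j) $ i" "\<lambda>j. Nj j + ereal (\<epsilon> (r2 j))"] up lo hi by simp
    have c2: "(\<lambda>j. q (r2 j) $ i) \<longlonglongrightarrow> p $ i"
      using tendsto_vec_nth[OF LIMSEQ_subseq_LIMSEQ[OF qlim r2(1)]] by (simp add: o_def)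
    show ?thesis using LIMSEQ_unique[OF c2 c1] N_def by simp
  qed
  have "p = (\<chi> i. SUP x\<in>A. T x + x $ i)"
    using pcomp SUP_Max_fin[OF fin ne] by (simp add: vec_eq_iff)
  moreover have "(SUP x\<in>A. T x) = 0" using TM SUP_Max_fin[OF fin ne] by simp
  ultimately show "p \<in> maxplus_hull A" unfolding maxplus_hull_def using Tinf by blast
qed



definition negv :: "ereal ^ 'n \<Rightarrow> ereal ^ 'n" where
  "negv x = (\<chi> i. - (x $ i))"

lemma negv_negv[simp]: "negv (negv x) = x"
  by (simp add: negv_def vec_eq_iff)

lemma negv_nth[simp]: "negv x $ i = - (x $ i)"
  by (simp add: negv_def)

lemma inj_negv: "inj negv"
  by (metis injI negv_negv)

lemma negv_image_image[simp]: "negv ` negv ` S = S"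
  by (simp add: image_image)

lemma ereal_neg_inf_iff[simp]: "(- a = (\<infinity>::ereal)) = (a = -\<infinity>)" "(- a = -(\<infinity>::ereal)) = (a = \<infinity>)"
  by (cases a; simp)+

lemma sexp_neg: "sexp \<alpha> z = sexp (-\<alpha>) (-z)"
  by (cases z) (auto simp: sexp_def)

lemma slog_neg: "slog \<alpha> s = - slog (-\<alpha>) s"
  by (cases "\<alpha> > 0"; cases "\<alpha> = 0") (auto simp: slog_def)

lemma ereal_uminus_add2:
  fixes a b :: ereal
  assumes "\<not> (a = \<infinity> \<and> b = -\<infinity>)" "\<not> (a = -\<infinity> \<and> b = \<infinity>)"
  shows "- (a + b) = - a + - b"
  using assms by (cases a; cases b) auto

lemma sum_negv:
  "(\<Sum>y\<in>negv ` A. g y) = (\<Sum>x\<in>A. g (negv x))"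
  by (simp add: sum.reindex inj_on_def inj_negv[unfolded inj_def])

lemma sigma_neg_sub:
  fixes A :: "(ereal ^ 'n) set"
  assumes a0: "\<alpha> \<noteq> 0" and Ax: "\<forall>x\<in>A. \<forall>i. x $ i \<in> M_alpha \<alpha>"
  shows "sigma_hull \<alpha> A \<subseteq> negv ` sigma_hull (-\<alpha>) (negv ` A)"
proof
  fix p assume "p \<in> sigma_hull \<alpha> A"
  then obtain t where p: "p = (\<chi> i. slog \<alpha> (\<Sum>x\<in>A. sexp \<alpha> (t x + x $ i)))"
    and tM: "\<forall>x\<in>A. t x \<in> M_alpha \<alpha>" and t0: "slog \<alpha> (\<Sum>x\<in>A. sexp \<alpha> (t x)) = 0"
    unfolding sigma_hull_def by blast
  define t' where "t' y = - t (negv y)" for y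
  have noclash: "\<not> (a = \<infinity> \<and> b = -\<infinity>) \<and> \<not> (a = -\<infinity> \<and> b = \<infinity>)"
    if "a \<in> M_alpha \<alpha>" "b \<in> M_alpha \<alpha>" for a b
    using that unfolding M_alpha_def by (auto split: if_splits)
  have Mneg: "- a \<in> M_alpha (-\<alpha>)" if "a \<in> M_alpha \<alpha>" for a
    using that a0 unfolding M_alpha_def by (auto split: if_splits)
  define p' where "p' = (\<chi> i. slog (-\<alpha>) (\<Sum>y\<in>negv ` A. sexp (-\<alpha>) (t' y + y $ i)))"
  have "p' \<in> sigma_hull (-\<alpha>) (negv ` A)"
  proof -
    have "\<forall>y\<in>negv ` A. t' y \<in> M_alpha (-\<alpha>)" using tM Mneg unfolding t'_def by auto
    moreover have "slog (-\<alpha>) (\<Sum>y\<in>negv ` A. sexp (-\<alpha>) (t' y)) = 0"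
    proof -
      have "(\<Sum>y\<in>negv ` A. sexp (-\<alpha>) (t' y)) = (\<Sum>x\<in>A. sexp \<alpha> (t x))"
        unfolding sum_negv t'_def by (simp add: sexp_neg[of \<alpha>])
      then show ?thesis using t0 slog_neg[of "-\<alpha>"] by simp
    qed
    ultimately show ?thesis unfolding sigma_hull_def p'_def by blast
  qed
  moreover have "p = negv p'"
  proof -
    have "p $ i = negv p' $ i" for i
    proof -
      have "(\<Sum>y\<in>negv ` A. sexp (-\<alpha>) (t' y + y $ i)) = (\<Sum>x\<in>A. sexp \<alpha> (t x + x $ i))"
        unfolding sum_negv t'_def
      proof (intro sum.cong refl)
        fix x assume x: "x \<in> A"
        have "- t x + - (x $ i) = - (t x + x $ i)"
          using noclash[OF bspec[OF tM x] bspec[OF Ax x, rule_format]] by (simp add: ereal_uminus_add2)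
        then show "sexp (-\<alpha>) (- t (negv (negv x)) + negv x $ i) = sexp \<alpha> (t x + x $ i)"
          by (simp add: sexp_neg[of \<alpha>])
      qed
      then show ?thesis unfolding p p'_def using slog_neg[of \<alpha>] by simp
    qed
    then show ?thesis by (simp add: vec_eq_iff)
  qed
  ultimately show "p \<in> negv ` sigma_hull (-\<alpha>) (negv ` A)" by blast
qed

lemma minplus_sub:
  fixes A :: "(ereal ^ 'n) set"
  assumes Ax: "\<forall>x\<in>A. \<forall>i. x $ i \<noteq> -\<infinity>"
  shows "minplus_hull A \<subseteq> negv ` maxplus_hull (negv ` A)"
proof
  fix p assume "p \<in> minplus_hull A"
  then obtain t where p: "p = (\<chi> i. INF x\<in>A. t x + x $ i)" and tM: "\<forall>x\<in>A. t x \<noteq> -\<infinity>"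
    and t0: "(INF x\<in>A. t x) = 0"
    unfolding minplus_hull_def by blast
  define t' where "t' y = - t (negv y)" for y
  define p' where "p' = (\<chi> i. SUP y\<in>negv ` A. t' y + y $ i)"
  have "p' \<in> maxplus_hull (negv ` A)"
  proof -
    have "\<forall>y\<in>negv ` A. t' y \<noteq> \<infinity>" using tM unfolding t'_def by auto
    moreover have "(SUP y\<in>negv ` A. t' y) = 0"
    proof -
      have "(SUP y\<in>negv ` A. t' y) = (SUP x\<in>A. - t x)" unfolding t'_def by (simp add: image_image)
      also have "\<dots> = - (INF x\<in>A. t x)" by (rule ereal_SUP_uminus_eq)
      finally show ?thesis using t0 by simp
    qed
    ultimately show ?thesis unfolding maxplus_hull_def p'_def by blast
  qed
  moreover have "p = negv p'"
  proof -
    have "p $ i = negv p' $ i" for i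
    proof -
      have "(SUP y\<in>negv ` A. t' y + y $ i) = (SUP x\<in>A. - (t x + x $ i))"
        unfolding t'_def image_image
      proof (intro SUP_cong refl)
        fix x assume x: "x \<in> A"
        show "- t (negv (negv x)) + negv x $ i = - (t x + x $ i)"
          using tM x Ax by (simp add: ereal_uminus_add2)
      qed
      also have "\<dots> = - (INF x\<in>A. t x + x $ i)" by (rule ereal_SUP_uminus_eq)
      finally show ?thesis unfolding p p'_def by simp
    qed
    then show ?thesis by (simp add: vec_eq_iff)
  qed
  ultimately show "p \<in> negv ` maxplus_hull (negv ` A)" by blast
qed

lemma maxplus_sub:
  fixes A :: "(ereal ^ 'n) set"
  assumes Ax: "\<forall>x\<in>A. \<forall>i. x $ i \<noteq> \<infinity>"
  shows "maxplus_hull A \<subseteq> negv ` minplus_hull (negv ` A)"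
proof
  fix p assume "p \<in> maxplus_hull A"
  then obtain t where p: "p = (\<chi> i. SUP x\<in>A. t x + x $ i)" and tM: "\<forall>x\<in>A. t x \<noteq> \<infinity>"
    and t0: "(SUP x\<in>A. t x) = 0"
    unfolding maxplus_hull_def by blast
  define t' where "t' y = - t (negv y)" for y
  define p' where "p' = (\<chi> i. INF y\<in>negv ` A. t' y + y $ i)"
  have "p' \<in> minplus_hull (negv ` A)"
  proof -
    have "\<forall>y\<in>negv ` A. t' y \<noteq> -\<infinity>" using tM unfolding t'_def by auto
    moreover have "(INF y\<in>negv ` A. t' y) = 0"
    proof -
      have "(INF y\<in>negv ` A. t' y) = (INF x\<in>A. - t x)" unfolding t'_def by (simp add: image_image)
      also have "\<dots> = - (SUP x\<in>A. t x)" by (rule ereal_INF_uminus_eq)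
      finally show ?thesis using t0 by simp
    qed
    ultimately show ?thesis unfolding minplus_hull_def p'_def by blast
  qed
  moreover have "p = negv p'"
  proof -
    have "p $ i = negv p' $ i" for i
    proof -
      have "(INF y\<in>negv ` A. t' y + y $ i) = (INF x\<in>A. - (t x + x $ i))"
        unfolding t'_def image_image
      proof (intro INF_cong refl)
        fix x assume x: "x \<in> A"
        show "- t (negv (negv x)) + negv x $ i = - (t x + x $ i)"
          using tM x Ax by (simp add: ereal_uminus_add2)
      qed
      also have "\<dots> = - (SUP x\<in>A. t x + x $ i)" by (rule ereal_INF_uminus_eq)
      finally show ?thesis unfolding p p'_def by simp
    qed
    then show ?thesis by (simp add: vec_eq_iff)
  qed
  ultimately show "p \<in> negv ` minplus_hull (negv ` A)" by blast
qed

lemma tendsto_negv: "q \<longlonglongrightarrow> p \<Longrightarrow> (\<lambda>k. negv (q k)) \<longlonglongrightarrow> negv p"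
  unfolding negv_def by (intro tendsto_vec_lambda tendsto_uminus_ereal tendsto_vec_nth)

lemma PK_liminf_negv_sub: "PK_liminf (\<lambda>k. negv ` E k) \<subseteq> negv ` PK_liminf E"
proof
  fix p assume "p \<in> PK_liminf (\<lambda>k. negv ` E k)"
  then obtain q where q: "\<forall>n. q n \<in> negv ` E n" "q \<longlonglongrightarrow> p" unfolding PK_liminf_def by blast
  have "\<forall>n. negv (q n) \<in> E n"
  proof
    fix n obtain e where "e \<in> E n" "q n = negv e" using q(1) by blast
    then show "negv (q n) \<in> E n" by simp
  qed
  moreover have "(\<lambda>n. negv (q n)) \<longlonglongrightarrow> negv p" using tendsto_negv[OF q(2)] .
  ultimately have "negv p \<in> PK_liminf E" unfolding PK_liminf_def mem_Collect_eq
    by (intro exI[of _ "\<lambda>n. negv (q n)"] conjI)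
  then show "p \<in> negv ` PK_liminf E" by (metis image_eqI negv_negv)
qed

lemma PK_limsup_negv_sub: "PK_limsup (\<lambda>k. negv ` E k) \<subseteq> negv ` PK_limsup E"
proof
  fix p assume "p \<in> PK_limsup (\<lambda>k. negv ` E k)"
  then obtain r q where q: "strict_mono r" "\<forall>n. q n \<in> negv ` E (r n)" "q \<longlonglongrightarrow> p" unfolding PK_limsup_def by blast
  have "\<forall>n. negv (q n) \<in> E (r n)"
  proof
    fix n obtain e where "e \<in> E (r n)" "q n = negv e" using q(2) by blast
    then show "negv (q n) \<in> E (r n)" by simp
  qed
  moreover have "(\<lambda>n. negv (q n)) \<longlonglongrightarrow> negv p" using tendsto_negv[OF q(3)] .
  ultimately have "negv p \<in> PK_limsup E" unfolding PK_limsup_def mem_Collect_eq using q(1)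
    by (intro exI[of _ r] exI[of _ "\<lambda>n. negv (q n)"] conjI)
  then show "p \<in> negv ` PK_limsup E" by (metis image_eqI negv_negv)
qed

lemma PK_liminf_negv: "PK_liminf (\<lambda>k. negv ` E k) = negv ` PK_liminf E"
proof
  show "PK_liminf (\<lambda>k. negv ` E k) \<subseteq> negv ` PK_liminf E" by (rule PK_liminf_negv_sub)
  have "PK_liminf E \<subseteq> negv ` PK_liminf (\<lambda>k. negv ` E k)"
    using PK_liminf_negv_sub[of "\<lambda>k. negv ` E k"] by simp
  then show "negv ` PK_liminf E \<subseteq> PK_liminf (\<lambda>k. negv ` E k)" by auto
qed

lemma PK_limsup_negv: "PK_limsup (\<lambda>k. negv ` E k) = negv ` PK_limsup E"
proof
  show "PK_limsup (\<lambda>k. negv ` E k) \<subseteq> negv ` PK_limsup E" by (rule PK_limsup_negv_sub)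
  have "PK_limsup E \<subseteq> negv ` PK_limsup (\<lambda>k. negv ` E k)"
    using PK_limsup_negv_sub[of "\<lambda>k. negv ` E k"] by simp
  then show "negv ` PK_limsup E \<subseteq> PK_limsup (\<lambda>k. negv ` E k)" by auto
qed



lemma PK_liminf_sub_limsup: "PK_liminf E \<subseteq> PK_limsup E"
proof
  fix p assume "p \<in> PK_liminf E"
  then obtain q where "\<forall>n. q n \<in> E n" "q \<longlonglongrightarrow> p" unfolding PK_liminf_def by blast
  then show "p \<in> PK_limsup E" unfolding PK_limsup_def mem_Collect_eq
    by (intro exI[of _ id] exI[of _ q] conjI strict_mono_id) auto
qed

lemma part1:
  fixes A :: "(ereal ^ 'n) set"
  assumes "finite A" "\<forall>x\<in>A. \<forall>i. x $ i \<noteq> \<infinity>" "\<forall>k. \<alpha> k > 0" "filterlim \<alpha> at_top sequentially"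
  shows "PK_limit (\<lambda>k. sigma_hull (\<alpha> k) A) (maxplus_hull A)"
  using hull_sub_liminf[OF assms] limsup_sub_hull[OF assms] PK_liminf_sub_limsup[of "\<lambda>k. sigma_hull (\<alpha> k) A"]
  unfolding PK_limit_def by blast

lemma part2:
  fixes A :: "(ereal ^ 'n) set"
  assumes fin: "finite A" and Ax: "\<forall>x\<in>A. \<forall>i. x $ i \<noteq> -\<infinity>" and aneg: "\<forall>k. \<alpha> k < 0"
    and lim: "filterlim \<alpha> at_bot sequentially"
  shows "PK_limit (\<lambda>k. sigma_hull (\<alpha> k) A) (minplus_hull A)"
proof -
  define B where "B = negv ` A"
  define \<beta> where "\<beta> k = - \<alpha> k" for k
  have finB: "finite B" using fin B_def by simp
  have Bx: "\<forall>x\<in>B. \<forall>i. x $ i \<noteq> \<infinity>" using Ax B_def by auto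
  have bpos: "\<forall>k. \<beta> k > 0" using aneg \<beta>_def by simp
  have blim: "filterlim \<beta> at_top sequentially"
  proof -
    have "\<beta> = (\<lambda>k. - \<alpha> k)" using \<beta>_def by auto
    then show ?thesis using lim filterlim_uminus_at_top[of \<beta> sequentially] by simp
  qed
  have AB: "negv ` B = A" using B_def by simp
  have seq: "sigma_hull (\<alpha> k) A = negv ` sigma_hull (\<beta> k) B" for k
  proof
    have "\<not> \<alpha> k > 0" using aneg by (metis less_asym)
    then have "\<forall>x\<in>A. \<forall>i. x $ i \<in> M_alpha (\<alpha> k)" using Ax unfolding M_alpha_def by simp
    moreover have "\<alpha> k \<noteq> 0" using aneg by (metis less_irrefl)
    ultimately show "sigma_hull (\<alpha> k) A \<subseteq> negv ` sigma_hull (\<beta> k) B"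
      using sigma_neg_sub[of "\<alpha> k" A] \<beta>_def B_def by simp
    have "\<forall>x\<in>B. \<forall>i. x $ i \<in> M_alpha (\<beta> k)" using Bx bpos unfolding M_alpha_def by auto
    moreover have "\<beta> k \<noteq> 0" using bpos by (metis less_irrefl)
    ultimately have "sigma_hull (\<beta> k) B \<subseteq> negv ` sigma_hull (\<alpha> k) A"
      using sigma_neg_sub[of "\<beta> k" B] \<beta>_def AB by simp
    then show "negv ` sigma_hull (\<beta> k) B \<subseteq> sigma_hull (\<alpha> k) A"
      by (metis image_mono negv_image_image)
  qed
  have meq: "minplus_hull A = negv ` maxplus_hull B"
  proof
    show "minplus_hull A \<subseteq> negv ` maxplus_hull B" using minplus_sub[OF Ax] B_def by simp
    have "maxplus_hull B \<subseteq> negv ` minplus_hull A" using maxplus_sub[OF Bx] AB by simp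
    then show "negv ` maxplus_hull B \<subseteq> minplus_hull A" by (metis image_mono negv_image_image)
  qed
  have P: "PK_limit (\<lambda>k. sigma_hull (\<beta> k) B) (maxplus_hull B)"
    using part1[OF finB Bx bpos blim] .
  show ?thesis
    using P unfolding PK_limit_def seq meq PK_liminf_negv PK_limsup_negv by simp
qed

theorem mainTheorem1:
  shows "(\<forall>(A :: (ereal ^ 'n) set) (\<alpha> :: nat \<Rightarrow> real).
            finite A \<and> (\<forall>x\<in>A. \<forall>i. x $ i \<noteq> \<infinity>) \<and> (\<forall>k. \<alpha> k > 0)
            \<and> filterlim \<alpha> at_top sequentially
          \<longrightarrow> PK_limit (\<lambda>k. sigma_hull (\<alpha> k) A) (maxplus_hull A))
       \<and> (\<forall>(A :: (ereal ^ 'n) set) (\<alpha> :: nat \<Rightarrow> real).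
            finite A \<and> (\<forall>x\<in>A. \<forall>i. x $ i \<noteq> -\<infinity>) \<and> (\<forall>k. \<alpha> k < 0)
            \<and> filterlim \<alpha> at_bot sequentially
          \<longrightarrow> PK_limit (\<lambda>k. sigma_hull (\<alpha> k) A) (minplus_hull A))"
  using part1 part2 by blast

end
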